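(* Let $n \in \mathbb{N}$, $X = L^2([0,1]^n)$, $Y = L^2([0,2]^n)$, and define $F : X \to Y$ by $[F(x)](s) = \int_{\mathbb{R}^n} x(s-t)\,x(t)\,dt$ for $s \in [0,2]^n$ (functions in $X$ extended by zero outside $[0,1]^n$). Then the equation $F(x) = y$ is locally ill-posed at every point $x^\dagger \in X$: for every $x^\dagger \in X$ and every $r>0$ there exists a sequence $\{x_k\} \subset X$ with $\|x_k - x^\dagger\|_X \le r$ for all $k$, such that $\|F(x_k) - F(x^\dagger)\|_Y \to 0$ but $\|x_k - x^\dagger\|_X \not\to 0$ as $k \to \infty$.
   Context: All functions are real-valued; $L^2([0,1]^n)$ (resp. $L^2([0,2]^n)$) denotes the real functions in $L^2(\mathbb{R}^n)$ vanishing a.e. outside $[0,1]^n$ (resp. $[0,2]^n$), with the usual $L^2$ norm. *)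

theory Defs
  imports "HOL-Analysis.Analysis"
begin

text \<open>Real functions on R^n (R^n modelled by a Euclidean space 'a of dimension n),
  square integrable w.r.t. Lebesgue measure and vanishing a.e. outside the box C.\<close>
definition L2_on :: "'a::euclidean_space set \<Rightarrow> ('a \<Rightarrow> real) set" where
  "L2_on C = {f. f \<in> borel_measurable lebesgue
                 \<and> integrable lebesgue (\<lambda>x. (f x)\<^sup>2)
                 \<and> (AE x in lebesgue. x \<notin> C \<longrightarrow> f x = 0)}"

definition L2_norm :: "('a::euclidean_space \<Rightarrow> real) \<Rightarrow> real" where
  "L2_norm f = sqrt (LINT x|lebesgue. (f x)\<^sup>2)"

text \<open>The autoconvolution operator F, [F x](s) = int x(s-t) x(t) dt for s in [0,2]^n
  (and 0 outside [0,2]^n, so that F x is an element of L^2([0,2]^n)).\<close>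
definition autoconv :: "('a::euclidean_space \<Rightarrow> real) \<Rightarrow> ('a \<Rightarrow> real)" where
  "autoconv x s = (if s \<in> cbox 0 (2 *\<^sub>R One)
                   then (LINT t|lebesgue. x (s - t) * x t) else 0)"

end

theory Submission
  imports Defs
begin

lemma leb_reflect:
  fixes s :: "'a::euclidean_space"
  shows "distr lebesgue lebesgue (\<lambda>x. s - x) = lebesgue"
    and "(\<lambda>x. s - x) \<in> lebesgue \<rightarrow>\<^sub>M lebesgue"
proof -
  have T: "(\<lambda>x. s + (\<Sum>j\<in>Basis. ((-1) * (x \<bullet> j)) *\<^sub>R j)) = (\<lambda>x. s - x)"
  proof
    fix x :: 'a
    have "(\<Sum>j\<in>Basis. ((-1) * (x \<bullet> j)) *\<^sub>R j) = - (\<Sum>j\<in>Basis. (x \<bullet> j) *\<^sub>R j)"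
      by (simp add: sum_negf)
    then show "s + (\<Sum>j\<in>Basis. ((-1) * (x \<bullet> j)) *\<^sub>R j) = s - x"
      by (simp add: euclidean_representation)
  qed
  have "lebesgue = density (distr lebesgue lebesgue (\<lambda>x. s - x)) (\<lambda>_. (\<Prod>j\<in>(Basis::'a set). \<bar>-1::real\<bar>))"
    using lebesgue_affine_euclidean[of "\<lambda>_. -1" s] T by simp
  then show "distr lebesgue lebesgue (\<lambda>x. s - x) = lebesgue"
    by (simp add: density_1)
  show "(\<lambda>x. s - x) \<in> lebesgue \<rightarrow>\<^sub>M lebesgue"
    using lebesgue_affine_measurable[of "\<lambda>_. -1" s] T by simp
qed

lemma integrable_prod_sq:
  fixes f g :: "'a \<Rightarrow> real"
  assumes "f \<in> borel_measurable M" "g \<in> borel_measurable M"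
    "integrable M (\<lambda>x. (f x)\<^sup>2)" "integrable M (\<lambda>x. (g x)\<^sup>2)"
  shows "integrable M (\<lambda>x. f x * g x)"
proof (rule Bochner_Integration.integrable_bound[where f="\<lambda>x. ((f x)\<^sup>2 + (g x)\<^sup>2)/2"])
  show "integrable M (\<lambda>x. ((f x)\<^sup>2 + (g x)\<^sup>2)/2)" using assms by auto
  show "(\<lambda>x. f x * g x) \<in> borel_measurable M" using assms by measurable
  show "AE x in M. norm (f x * g x) \<le> norm (((f x)\<^sup>2 + (g x)\<^sup>2)/2)"
  proof (rule AE_I2)
    fix x
    have "0 \<le> (\<bar>f x\<bar> - \<bar>g x\<bar>)\<^sup>2" by simp
    then show "norm (f x * g x) \<le> norm (((f x)\<^sup>2 + (g x)\<^sup>2)/2)"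
      by (simp add: power2_eq_square abs_mult algebra_simps)
  qed
qed

lemma abs_cont:
  fixes f :: "'a::euclidean_space \<Rightarrow> real"
  assumes fi: "integrable lebesgue f" and f0: "\<And>x. 0 \<le> f x" and e: "e > 0"
  shows "\<exists>d>0. \<forall>A \<in> lmeasurable. measure lebesgue A < d \<longrightarrow>
            (LINT x|lebesgue. f x * indicator A x) < e"
proof -
  have fm[measurable]: "f \<in> borel_measurable lebesgue" using fi by auto
  have lim: "(\<lambda>N::nat. LINT x|lebesgue. f x - min (f x) (real N)) \<longlonglongrightarrow> integral\<^sup>L lebesgue (\<lambda>x::'a. 0::real)"
  proof (rule integral_dominated_convergence[where w=f])
    show "AE x in lebesgue. (\<lambda>N::nat. f x - min (f x) (real N)) \<longlonglongrightarrow> 0"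
    proof (rule AE_I2)
      fix x
      have "eventually (\<lambda>N::nat. f x - min (f x) (real N) = 0) sequentially"
        using eventually_ge_at_top[of "nat \<lceil>f x\<rceil>"]
        by eventually_elim (smt (verit) of_nat_ceiling of_nat_mono)
      then show "(\<lambda>N::nat. f x - min (f x) (real N)) \<longlonglongrightarrow> 0"
        by (simp add: tendsto_eventually)
    qed
    show "\<And>i. AE x in lebesgue. norm (f x - min (f x) (real i)) \<le> f x"
      using f0 by (auto)
  qed (use fi in auto)
  then obtain N :: nat where N: "(LINT x|lebesgue. f x - min (f x) (real N)) < e/2"
    using e by (auto dest!: LIMSEQ_D[where r="e/2"] simp: abs_less_iff)
  define d where "d = e / (2 * (real N + 1))"
  have d: "d > 0" using e by (simp add: d_def)
  have minint: "integrable lebesgue (\<lambda>x. min (f x) (real N))"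
    by (rule Bochner_Integration.integrable_bound[OF fi]) (use f0 in auto)
  show ?thesis
  proof (intro exI[of _ d] conjI d ballI impI)
    fix A :: "'a set" assume A: "A \<in> lmeasurable" and mA: "measure lebesgue A < d"
    have Aset: "A \<in> sets lebesgue" and Aem: "emeasure lebesgue A < \<infinity>"
      using A by (auto simp: fmeasurable_def)
    have iA: "integrable lebesgue (indicator A :: 'a \<Rightarrow> real)"
      using Aset Aem by auto
    have "(LINT x|lebesgue. f x * indicator A x) \<le>
          (LINT x|lebesgue. (f x - min (f x) (real N)) + real N * indicator A x)"
    proof (rule integral_mono)
      show "integrable lebesgue (\<lambda>x. f x * indicator A x)"
        using integrable_mult_indicator[OF Aset fi] by (simp add: mult.commute)
      show "integrable lebesgue (\<lambda>x. (f x - min (f x) (real N)) + real N * indicator A x)"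
        using fi minint iA by auto
      show "f x * indicator A x \<le> (f x - min (f x) (real N)) + real N * indicator A x" for x
        using f0[of x] by (auto split: split_indicator)
    qed
    also have "\<dots> = (LINT x|lebesgue. f x - min (f x) (real N)) + real N * measure lebesgue A"
      using fi minint iA by (simp add: Bochner_Integration.integral_add)
    also have "\<dots> < e/2 + real N * d"
    proof -
      have "real N * measure lebesgue A \<le> real N * d" using mA by (simp add: mult_left_mono)
      then show ?thesis using N by linarith
    qed
    also have "\<dots> \<le> e"
      using e by (simp add: d_def field_simps)
    finally show "(LINT x|lebesgue. f x * indicator A x) < e" .
  qed
qed
lemma cbox_meas:
  fixes l u :: "'a::euclidean_space"
  assumes "\<And>i. i \<in> Basis \<Longrightarrow> l \<bullet> i \<le> u \<bullet> i"
  shows "measure lebesgue (cbox l u) = (\<Prod>i\<in>Basis. (u - l) \<bullet> i)"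
  using measure_lborel_cbox[of l u] assms by (simp add: measure_completion)

lemma cube_meas:
  fixes b :: real
  assumes "b \<ge> 0"
  shows "measure lebesgue (cbox (0::'a::euclidean_space) (b *\<^sub>R One)) = b ^ DIM('a)"
  using cbox_meas[of "0::'a" "b *\<^sub>R One"] assms by simp

lemma sq_reflect:
  fixes g :: "'a::euclidean_space \<Rightarrow> real"
  assumes gm: "g \<in> borel_measurable lebesgue" and gi: "integrable lebesgue (\<lambda>x. (g x)\<^sup>2)"
  shows "(\<lambda>t. g (s - t)) \<in> borel_measurable lebesgue"
    and "integrable lebesgue (\<lambda>t. (g (s - t))\<^sup>2)"
proof -
  show "(\<lambda>t. g (s - t)) \<in> borel_measurable lebesgue"
    using measurable_compose[OF leb_reflect(2) gm] by simp
  have "integrable (distr lebesgue lebesgue (\<lambda>x. s - x)) (\<lambda>x. (g x)\<^sup>2)"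
    using gi by (simp add: leb_reflect(1))
  then show "integrable lebesgue (\<lambda>t. (g (s - t))\<^sup>2)"
    using integrable_distr_eq[OF leb_reflect(2), of "\<lambda>x. (g x)\<^sup>2" s] gm by simp
qed

lemma conv_swap:
  fixes g1 g2 :: "'a::euclidean_space \<Rightarrow> real"
  assumes "g1 \<in> borel_measurable lebesgue" "g2 \<in> borel_measurable lebesgue"
  shows "(LINT t|lebesgue. g1 (s - t) * g2 t) = (LINT u|lebesgue. g1 u * g2 (s - u))"
proof -
  have m: "(\<lambda>u. g1 u * g2 (s - u)) \<in> borel_measurable lebesgue"
    using assms measurable_compose[OF leb_reflect(2) assms(2)] by measurable
  have "(LINT u|lebesgue. g1 u * g2 (s - u)) = integral\<^sup>L (distr lebesgue lebesgue (\<lambda>x. s - x)) (\<lambda>u. g1 u * g2 (s - u))"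
    by (simp add: leb_reflect(1))
  also have "\<dots> = (LINT t|lebesgue. g1 (s - t) * g2 t)"
    using integral_distr[OF leb_reflect(2) m] by simp
  finally show ?thesis by simp
qed

lemma cross_bound:
  fixes g :: "'a::euclidean_space \<Rightarrow> real"
  assumes gm: "g \<in> borel_measurable lebesgue" and gi: "integrable lebesgue (\<lambda>x. (g x)\<^sup>2)"
    and S: "S \<in> lmeasurable" and mu: "measure lebesgue S > 0" and K: "K > 0" and r: "r \<ge> 0"
  shows "\<bar>LINT u|lebesgue. g u * (r / sqrt (measure lebesgue S) * indicator S u)\<bar>
          \<le> r * (K * (LINT u|lebesgue. (g u)\<^sup>2 * indicator S u) + 1 / K) / 2"
proof -
  define \<mu> where "\<mu> = measure lebesgue S"
  have Sset: "S \<in> sets lebesgue" and Sem: "emeasure lebesgue S < \<infinity>"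
    using S by (auto simp: fmeasurable_def)
  have iS: "integrable lebesgue (indicator S :: 'a \<Rightarrow> real)" using Sset Sem by auto
  have igS: "integrable lebesgue (\<lambda>u. (g u)\<^sup>2 * indicator S u)"
    using integrable_mult_indicator[OF Sset gi] by (simp add: mult.commute)
  have sq: "sqrt \<mu> > 0" using mu by (simp add: \<mu>_def)
  have pw: "\<bar>g u * (r / sqrt \<mu> * indicator S u)\<bar> \<le> (r * K / 2) * ((g u)\<^sup>2 * indicator S u) + (r / (2 * K * \<mu>)) * indicator S u" for u
  proof (cases "u \<in> S")
    case True
    define l where "l = K * sqrt \<mu>"
    have l: "l > 0" using K sq by (simp add: l_def)
    have am: "\<bar>g u\<bar> \<le> (l * (g u)\<^sup>2 + 1 / l) / 2"
    proof -
      have "0 \<le> (l * \<bar>g u\<bar> - 1)\<^sup>2 / l" using l by simp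
      also have "(l * \<bar>g u\<bar> - 1)\<^sup>2 / l = l * (g u)\<^sup>2 - 2 * \<bar>g u\<bar> + 1 / l"
        using l by (simp add: power2_eq_square field_simps)
      finally show ?thesis by simp
    qed
    have "\<bar>g u * (r / sqrt \<mu> * indicator S u)\<bar> = (r / sqrt \<mu>) * \<bar>g u\<bar>"
      using True r sq by (simp add: abs_mult)
    also have "\<dots> \<le> (r / sqrt \<mu>) * ((l * (g u)\<^sup>2 + 1 / l) / 2)"
      using am r sq by (intro mult_left_mono) auto
    also have "\<dots> = (r * K / 2) * ((g u)\<^sup>2 * indicator S u) + (r / (2 * K * \<mu>)) * indicator S u"
      using True sq K mu by (simp add: l_def field_simps \<mu>_def)
    finally show ?thesis .
  qed simp
  have "\<bar>LINT u|lebesgue. g u * (r / sqrt \<mu> * indicator S u)\<bar>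
        \<le> (LINT u|lebesgue. (r * K / 2) * ((g u)\<^sup>2 * indicator S u) + (r / (2 * K * \<mu>)) * indicator S u)"
  proof (rule integral_abs_bound_integral)
    show "integrable lebesgue (\<lambda>u. g u * (r / sqrt \<mu> * indicator S u))"
    proof -
      have "integrable lebesgue (\<lambda>u. g u * indicator S u)"
      proof (rule integrable_prod_sq[OF gm _ gi])
        have "(\<lambda>u. (indicator S u :: real)\<^sup>2) = indicator S"
          by (auto simp: fun_eq_iff split: split_indicator)
        then show "integrable lebesgue (\<lambda>u. (indicator S u :: real)\<^sup>2)" using iS by simp
      qed (use Sset in auto)
      then have "integrable lebesgue (\<lambda>u. (r / sqrt \<mu>) * (g u * indicator S u))"
        by (rule integrable_mult_right)
      then show ?thesis by (simp add: ac_simps)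
    qed
    show "integrable lebesgue (\<lambda>u. (r * K / 2) * ((g u)\<^sup>2 * indicator S u) + (r / (2 * K * \<mu>)) * indicator S u)"
      using igS iS by auto
  qed (rule pw)
  also have "\<dots> = (r * K / 2) * (LINT u|lebesgue. (g u)\<^sup>2 * indicator S u) + (r / (2 * K * \<mu>)) * \<mu>"
    using igS iS by (simp add: \<mu>_def)
  also have "\<dots> = r * (K * (LINT u|lebesgue. (g u)\<^sup>2 * indicator S u) + 1 / K) / 2"
    using mu K by (simp add: \<mu>_def field_simps)
  finally show ?thesis by (simp add: \<mu>_def)
qed

theorem theorem4p2:
  fixes xd :: "'a::euclidean_space \<Rightarrow> real" and r :: real
  assumes "xd \<in> L2_on (cbox 0 One)" and "r > 0"
  shows "\<exists>xk :: nat \<Rightarrow> ('a \<Rightarrow> real).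
           (\<forall>k. xk k \<in> L2_on (cbox 0 One))
         \<and> (\<forall>k. L2_norm (\<lambda>t. xk k t - xd t) \<le> r)
         \<and> ((\<lambda>k. L2_norm (\<lambda>s. autoconv (xk k) s - autoconv xd s)) \<longlonglongrightarrow> 0)
         \<and> \<not> ((\<lambda>k. L2_norm (\<lambda>t. xk k t - xd t)) \<longlonglongrightarrow> 0)"
proof -
  have xdm[measurable]: "xd \<in> borel_measurable lebesgue"
    and xdi: "integrable lebesgue (\<lambda>x. (xd x)\<^sup>2)"
    and xdAE: "AE x in lebesgue. x \<notin> cbox 0 One \<longrightarrow> xd x = 0"
    using assms(1) by (auto simp: L2_on_def)
  have r: "r > 0" by fact
  define n where "n = DIM('a)"
  have n1: "n \<ge> 1" by (simp add: n_def DIM_positive Suc_leI)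
  define a where "a k = 1 / (real k + 1)" for k :: nat
  define Q where "Q k = cbox (0::'a) (a k *\<^sub>R One)" for k
  define m where "m k = a k ^ n" for k
  define c where "c k = r / sqrt (m k)" for k
  define h where "h k t = c k * indicator (Q k) t" for k t
  define xk where "xk k t = xd t + h k t" for k t
  have a_pos: "a k > 0" and a_le1: "a k \<le> 1" for k
    by (auto simp: a_def field_simps)
  have m_pos: "m k > 0" for k using a_pos by (simp add: m_def)
  have mQ: "measure lebesgue (Q k) = m k" for k
    using cube_meas[of "a k"] a_pos[of k] by (simp add: Q_def m_def n_def)
  have Qlm: "Q k \<in> lmeasurable" for k by (simp add: Q_def)
  have Qsets: "Q k \<in> sets lebesgue" for k using Qlm[of k] by (auto simp: fmeasurable_def)
  have iQ: "integrable lebesgue (indicator (Q k) :: 'a \<Rightarrow> real)" for k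
    using Qlm[of k] by (auto simp: fmeasurable_def)
  have hm[measurable]: "h k \<in> borel_measurable lebesgue" for k
    unfolding h_def[abs_def] using Qsets[of k] by measurable
  have hsq: "(\<lambda>t. (h k t)\<^sup>2) = (\<lambda>t. (c k)\<^sup>2 * indicator (Q k) t)" for k
    by (auto simp: h_def fun_eq_iff power2_eq_square split: split_indicator)
  have hi: "integrable lebesgue (\<lambda>t. (h k t)\<^sup>2)" for k
    unfolding hsq using iQ[of k] by simp
  have c2m: "(c k)\<^sup>2 * m k = r\<^sup>2" for k
    using m_pos[of k] by (simp add: c_def power_divide)
  have hint: "(LINT t|lebesgue. (h k t)\<^sup>2) = r\<^sup>2" for k
    unfolding hsq using iQ[of k] mQ[of k] c2m[of k] by simp
  have QsubC: "Q k \<subseteq> cbox 0 One" for k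
    using a_le1[of k] a_pos[of k] unfolding Q_def by (auto simp: mem_box) (meson order_trans)
  have xkm[measurable]: "xk k \<in> borel_measurable lebesgue" for k
    unfolding xk_def[abs_def] by measurable
  have F1: "xk k \<in> L2_on (cbox 0 One)" for k
  proof -
    have "integrable lebesgue (\<lambda>t. (xk k t)\<^sup>2)"
    proof (rule Bochner_Integration.integrable_bound[where f="\<lambda>t. 2 * (xd t)\<^sup>2 + 2 * (h k t)\<^sup>2"])
      show "integrable lebesgue (\<lambda>t. 2 * (xd t)\<^sup>2 + 2 * (h k t)\<^sup>2)" using xdi hi[of k] by auto
      show "AE t in lebesgue. norm ((xk k t)\<^sup>2) \<le> norm (2 * (xd t)\<^sup>2 + 2 * (h k t)\<^sup>2)"
      proof (rule AE_I2)
        fix t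
        have "0 \<le> (xd t - h k t)\<^sup>2" by simp
        then have "(xd t + h k t)\<^sup>2 \<le> 2 * (xd t)\<^sup>2 + 2 * (h k t)\<^sup>2"
          by (smt (verit) power2_diff power2_sum)
        then show "norm ((xk k t)\<^sup>2) \<le> norm (2 * (xd t)\<^sup>2 + 2 * (h k t)\<^sup>2)"
          by (simp add: xk_def)
      qed
    qed measurable
    moreover have "AE x in lebesgue. x \<notin> cbox 0 One \<longrightarrow> xk k x = 0"
      using xdAE by eventually_elim (use QsubC[of k] in \<open>auto simp: xk_def h_def split: split_indicator\<close>)
    ultimately show ?thesis using xkm[of k] by (simp add: L2_on_def)
  qed
  have diffh: "(\<lambda>t. xk k t - xd t) = h k" for k by (auto simp: xk_def fun_eq_iff)
  have F2: "L2_norm (\<lambda>t. xk k t - xd t) = r" for k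
    unfolding diffh L2_norm_def hint using r by simp
  show ?thesis
  proof (intro exI[of _ xk] conjI allI)
    show "xk k \<in> L2_on (cbox 0 One)" for k by (rule F1)
    show "L2_norm (\<lambda>t. xk k t - xd t) \<le> r" for k by (simp add: F2)
    show "\<not> (\<lambda>k. L2_norm (\<lambda>t. xk k t - xd t)) \<longlonglongrightarrow> 0"
      using r by (simp add: F2 LIMSEQ_const_iff)
    show "(\<lambda>k. L2_norm (\<lambda>s. autoconv (xk k) s - autoconv xd s)) \<longlonglongrightarrow> 0"
    proof -
      define S where "S k s = {u. s - u \<in> Q k}" for k s
      have S_eq: "S k s = cbox (s - a k *\<^sub>R One) s" for k s
        by (auto simp: S_def Q_def mem_box inner_diff_left algebra_simps)
      have Slm: "S k s \<in> lmeasurable" for k s by (simp add: S_eq)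
      have mS: "measure lebesgue (S k s) = m k" for k s
      proof -
        have "measure lebesgue (cbox (s - a k *\<^sub>R One) s) = (\<Prod>i\<in>Basis. (s - (s - a k *\<^sub>R One)) \<bullet> i)"
          by (rule cbox_meas) (use a_pos[of k] in \<open>simp add: inner_diff_left\<close>)
        then show ?thesis by (simp add: S_eq m_def n_def)
      qed
      have Ssets: "S k s \<in> sets lebesgue" for k s using Slm[of k s] by (auto simp: fmeasurable_def)
      have hS: "h k (s - u) = c k * indicator (S k s) u" for k s u
        by (simp add: h_def S_def indicator_def)
      define X2 where "X2 k s = (LINT u|lebesgue. xd u * h k (s - u))" for k s
      define X3 where "X3 k s = (LINT t|lebesgue. h k (s - t) * h k t)" for k s
      define B where "B = cbox (0::'a) (2 *\<^sub>R One)"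
      have decomp: "autoconv (xk k) s - autoconv xd s = 2 * X2 k s + X3 k s" if sB: "s \<in> B" for k s
      proof -
        note xr = sq_reflect[OF xdm xdi, of s]
        note hr = sq_reflect[OF hm[of k] hi[of k], of s]
        have i1: "integrable lebesgue (\<lambda>t. xd (s - t) * xd t)"
          by (rule integrable_prod_sq[OF xr(1) xdm xr(2) xdi])
        have i2: "integrable lebesgue (\<lambda>t. xd (s - t) * h k t)"
          by (rule integrable_prod_sq[OF xr(1) hm xr(2) hi])
        have i3: "integrable lebesgue (\<lambda>t. h k (s - t) * xd t)"
          by (rule integrable_prod_sq[OF hr(1) xdm hr(2) xdi])
        have i4: "integrable lebesgue (\<lambda>t. h k (s - t) * h k t)"
          by (rule integrable_prod_sq[OF hr(1) hm hr(2) hi])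
        have "autoconv (xk k) s = (LINT t|lebesgue. ((xd (s - t) * xd t + xd (s - t) * h k t) + h k (s - t) * xd t) + h k (s - t) * h k t)"
          using sB by (simp add: autoconv_def B_def xk_def algebra_simps)
        also have "\<dots> = (((LINT t|lebesgue. xd (s - t) * xd t) + (LINT t|lebesgue. xd (s - t) * h k t))
              + (LINT t|lebesgue. h k (s - t) * xd t)) + (LINT t|lebesgue. h k (s - t) * h k t)"
          using i1 i2 i3 i4 by (simp add: Bochner_Integration.integral_add)
        also have "(LINT t|lebesgue. xd (s - t) * h k t) = X2 k s"
          unfolding X2_def by (rule conv_swap[OF xdm hm])
        also have "(LINT t|lebesgue. h k (s - t) * xd t) = X2 k s"
          unfolding X2_def by (simp add: mult.commute)
        finally show ?thesis
          using sB by (simp add: autoconv_def B_def X3_def)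
      qed
      have outB: "autoconv (xk k) s - autoconv xd s = 0" if "s \<notin> B" for k s
        using that by (simp add: autoconv_def B_def)
      have X3_bound: "\<bar>X3 k s\<bar> \<le> r\<^sup>2" for k s
      proof -
        have "\<bar>X3 k s\<bar> \<le> (LINT t|lebesgue. (c k)\<^sup>2 * indicator (Q k) t)"
          unfolding X3_def
        proof (rule integral_abs_bound_integral)
          show "integrable lebesgue (\<lambda>t. h k (s - t) * h k t)"
            using sq_reflect[OF hm[of k] hi[of k], of s] by (intro integrable_prod_sq) (auto intro: hi)
          show "integrable lebesgue (\<lambda>t. (c k)\<^sup>2 * indicator (Q k) t)" using iQ[of k] by simp
          show "\<bar>h k (s - t) * h k t\<bar> \<le> (c k)\<^sup>2 * indicator (Q k) t" for t
            using r m_pos[of k] by (auto simp: h_def c_def abs_mult power2_eq_square split: split_indicator)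
        qed
        also have "\<dots> = r\<^sup>2" using iQ[of k] mQ[of k] c2m[of k] by simp
        finally show ?thesis .
      qed
      have X3_zero: "X3 k s = 0" if "s \<notin> cbox 0 ((2 * a k) *\<^sub>R One)" for k s
      proof -
        have "h k (s - t) * h k t = 0" for t
        proof (rule ccontr)
          assume "h k (s - t) * h k t \<noteq> 0"
          then have "s - t \<in> Q k" "t \<in> Q k" by (auto simp: h_def split: split_indicator_asm)
          then have "s \<in> cbox 0 ((2 * a k) *\<^sub>R One)"
            by (auto simp: Q_def mem_box inner_diff_left) (smt (verit))+
          with that show False by simp
        qed
        then have z: "(\<lambda>t. h k (s - t) * h k t) = (\<lambda>t. 0)" by (rule ext)
        show ?thesis unfolding X3_def z by simp
      qed
      have X2_bound: "\<bar>X2 k s\<bar> \<le> r * (K * (LINT u|lebesgue. (xd u)\<^sup>2 * indicator (S k s) u) + 1 / K) / 2"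
        if K: "K > 0" for k s K
      proof -
        have "X2 k s = (LINT u|lebesgue. xd u * (r / sqrt (measure lebesgue (S k s)) * indicator (S k s) u))"
          unfolding X2_def hS mS c_def ..
        also have "\<bar>\<dots>\<bar> \<le> r * (K * (LINT u|lebesgue. (xd u)\<^sup>2 * indicator (S k s) u) + 1 / K) / 2"
          by (rule cross_bound[OF xdm xdi Slm]) (use mS m_pos K r in auto)
        finally show ?thesis .
      qed
      define Dsq where "Dsq k = (LINT s|lebesgue. (autoconv (xk k) s - autoconv xd s)\<^sup>2)" for k
      have "Dsq \<longlonglongrightarrow> 0"
      proof (rule LIMSEQ_I)
        fix e :: real assume e: "e > 0"
        define nn where "nn = (2::real) ^ n"
        have nn: "nn > 0" by (simp add: nn_def)
        define \<eta> where "\<eta> = e / (16 * nn)"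
        have \<eta>: "\<eta> > 0" using e nn by (simp add: \<eta>_def)
        define K where "K = r / sqrt \<eta>"
        have K: "K > 0" using r \<eta> by (simp add: K_def)
        define \<epsilon> where "\<epsilon> = \<eta> / r\<^sup>2"
        have \<epsilon>: "\<epsilon> > 0" using r \<eta> by (simp add: \<epsilon>_def)
        obtain \<delta> where \<delta>: "\<delta> > 0" and \<delta>P: "\<forall>A\<in>lmeasurable. measure lebesgue A < \<delta> \<longrightarrow>
              (LINT x|lebesgue. (xd x)\<^sup>2 * indicator A x) < \<epsilon>"
          using abs_cont[OF xdi _ \<epsilon>] by auto
        define \<zeta> where "\<zeta> = min \<delta> (e / (4 * r^4 * nn))"
        have \<zeta>: "\<zeta> > 0" using \<delta> e r nn by (simp add: \<zeta>_def)
        obtain N :: nat where N: "inverse (real N) < \<zeta>" "N > 0"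
          using ex_inverse_of_nat_less[OF \<zeta>] by auto
        have aN: "a k < \<zeta>" if "k \<ge> N" for k
        proof -
          have "a k \<le> inverse (real N)"
            using that N(2) by (simp add: a_def field_simps)
          then show ?thesis using N(1) by linarith
        qed
        have mk_le: "m k \<le> a k" for k
          unfolding m_def using power_decreasing[OF n1, of "a k"] a_pos[of k] a_le1[of k] by simp
        show "\<exists>no. \<forall>k\<ge>no. norm (Dsq k - 0) < e"
        proof (intro exI[of _ N] allI impI)
          fix k assume k: "k \<ge> N"
          have ak: "a k < \<delta>" "a k < e / (4 * r^4 * nn)" using aN[OF k] by (auto simp: \<zeta>_def)
          have X2sq: "(X2 k s)\<^sup>2 \<le> \<eta>" for s
          proof -
            have I: "(LINT u|lebesgue. (xd u)\<^sup>2 * indicator (S k s) u) < \<epsilon>"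
              using \<delta>P Slm[of k s] mS[of k s] mk_le[of k] ak by auto
            have "\<bar>X2 k s\<bar> \<le> r * (K * (LINT u|lebesgue. (xd u)\<^sup>2 * indicator (S k s) u) + 1 / K) / 2"
              by (rule X2_bound[OF K])
            also have "\<dots> \<le> r * (K * \<epsilon> + 1 / K) / 2"
              using I K r by (intro mult_left_mono divide_right_mono add_right_mono) auto
            also have "\<dots> = sqrt \<eta>"
            proof -
              have "r * (K * \<epsilon>) = sqrt \<eta>"
                using r \<eta> by (simp add: K_def \<epsilon>_def power2_eq_square field_simps real_sqrt_mult[symmetric])
              moreover have "r * (1 / K) = sqrt \<eta>" using r \<eta> by (simp add: K_def)
              ultimately show ?thesis by (simp add: distrib_left)
            qed
            finally have "\<bar>X2 k s\<bar> \<le> sqrt \<eta>" .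
            then have "\<bar>X2 k s\<bar>\<^sup>2 \<le> (sqrt \<eta>)\<^sup>2" by (intro power_mono) auto
            then show ?thesis using \<eta> by simp
          qed
          define G where "G s = 8 * \<eta> * indicator B s + 2 * r^4 * indicator (cbox 0 ((2 * a k) *\<^sub>R One)) s" for s :: 'a
          have icb: "integrable lebesgue (indicator (cbox l u) :: 'a \<Rightarrow> real)" for l u :: 'a
            using lmeasurable_cbox[of l u] by (auto simp: fmeasurable_def)
          have Gi: "integrable lebesgue G"
            unfolding G_def[abs_def] B_def by (intro Bochner_Integration.integrable_add Bochner_Integration.integrable_mult_right icb)
          have Bm: "measure lebesgue B = nn"
            using cube_meas[of 2] by (simp add: B_def nn_def n_def)
          have Qm2: "measure lebesgue (cbox (0::'a) ((2 * a k) *\<^sub>R One)) = (2 * a k) ^ n"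
            using cube_meas[of "2 * a k"] a_pos[of k] by (simp add: n_def)
          have Gint: "(LINT s|lebesgue. G s) = 8 * \<eta> * nn + 2 * r^4 * (2 * a k) ^ n"
            unfolding G_def[abs_def] using Bm Qm2 icb by (simp add: B_def)
          have G0: "G s \<ge> 0" for s using \<eta> by (simp add: G_def)
          have pw: "(autoconv (xk k) s - autoconv xd s)\<^sup>2 \<le> G s" for s
          proof (cases "s \<in> B")
            case False then show ?thesis using outB[OF False] G0[of s] by simp
          next
            case True
            have X3sq: "(X3 k s)\<^sup>2 \<le> r^4 * indicator (cbox 0 ((2 * a k) *\<^sub>R One)) s"
            proof (cases "s \<in> cbox 0 ((2 * a k) *\<^sub>R One)")
              case True
              have "\<bar>X3 k s\<bar>\<^sup>2 \<le> (r\<^sup>2)\<^sup>2" using X3_bound[of k s] by (intro power_mono) auto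
              then show ?thesis using True by simp
            next
              case False then show ?thesis using X3_zero[OF False] by simp
            qed
            have "(autoconv (xk k) s - autoconv xd s)\<^sup>2 = (2 * X2 k s + X3 k s)\<^sup>2"
              using decomp[OF True] by simp
            also have "\<dots> \<le> 8 * (X2 k s)\<^sup>2 + 2 * (X3 k s)\<^sup>2"
            proof -
              have "0 \<le> (2 * X2 k s - X3 k s)\<^sup>2" by simp
              then show ?thesis by (smt (verit) power2_diff power2_sum power_mult_distrib)
            qed
            also have "\<dots> \<le> G s"
              using X2sq[of s] X3sq True by (simp add: G_def)
            finally show ?thesis .
          qed
          have up: "Dsq k \<le> (LINT s|lebesgue. G s)"
          proof (cases "integrable lebesgue (\<lambda>s. (autoconv (xk k) s - autoconv xd s)\<^sup>2)")
            case True
            then show ?thesis unfolding Dsq_def by (rule integral_mono[OF _ Gi pw])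
          next
            case False
            then have "Dsq k = 0" unfolding Dsq_def by (rule not_integrable_integral_eq)
            moreover have "0 \<le> (LINT s|lebesgue. G s)" using G0 by (intro integral_nonneg_AE) auto
            ultimately show ?thesis by simp
          qed
          have lo: "0 \<le> Dsq k" unfolding Dsq_def by (intro integral_nonneg_AE) auto
          have "2 * r^4 * (2 * a k) ^ n \<le> 2 * r^4 * nn * a k"
          proof -
            have "(2 * a k) ^ n = nn * m k" by (simp add: nn_def m_def power_mult_distrib)
            also have "\<dots> \<le> nn * a k" using mk_le[of k] nn by simp
            finally show ?thesis using r by simp
          qed
          also have "\<dots> < 2 * r^4 * nn * (e / (4 * r^4 * nn))"
          proof -
            have "2 * r^4 * nn > 0" using r nn by simp
            from mult_strict_left_mono[OF ak(2) this] show ?thesis by simp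
          qed
          also have "\<dots> = e / 2" using r nn by (simp add: field_simps)
          finally have "2 * r^4 * (2 * a k) ^ n < e / 2" .
          moreover have "8 * \<eta> * nn = e / 2" using nn by (simp add: \<eta>_def)
          ultimately have "(LINT s|lebesgue. G s) < e" using Gint by simp
          then show "norm (Dsq k - 0) < e" using up lo by simp
        qed
      qed
      then have "(\<lambda>k. sqrt (Dsq k)) \<longlonglongrightarrow> sqrt 0" by (rule tendsto_real_sqrt)
      then show ?thesis by (simp add: L2_norm_def Dsq_def)
    qed
  qed
qed
end
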